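(* Assume the setting below, that the spectral gap $\Delta$ is continuously differentiable on $[0,1]$ and satisfies the measure condition with constant $C>0$. Let $p\in(1,2)$ and let $u:[0,1]\to[0,1]$ be the schedule satisfying the power-law condition with exponent $p$, i.e. $u(0)=0$, $u(1)=1$ and $u'(s)=c_p\Delta^p(u(s))$ for $s\in[0,1]$, where $c_p=\int_0^1\Delta^{-p}(v)\,dv$. Then $$\mathcal{E}[u]\le B_0\,\Delta_*^{-1},$$ where $B_0$ is a finite constant depending only on $p$, $C$ and $A=\|H_1-H_0\|$ (one may take $B_0=2C_p+B_1+B_2$ with $C_p=\frac{Cp}{p-1}$, $B_1=\frac{2p^2AC^2(3-p)}{(p-1)(2-p)}$, $B_2=\frac{pAC^2(3-p)}{(p-1)(2-p)}$). Consequently $\eta(1)=\frac{c}{T}\mathcal{E}[u]=\mathcal{O}(\Delta_*^{-1})$.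
   Context: $H_0,H_1$ are Hermitian $n\times n$ matrices; $\|\cdot\|$ is the operator norm; $A:=\|H_1-H_0\|$. For $u\in[0,1]$ let $H(u)=(1-u)H_0+uH_1$ with eigenvalues $\lambda_1(u)\le\lambda_2(u)\le\dots\le\lambda_n(u)$; assume $\lambda_1(u)$ is simple for every $u$, and define the spectral gap $\Delta(u)=\lambda_2(u)-\lambda_1(u)>0$ and $\Delta_*=\min_{u\in[0,1]}\Delta(u)>0$. Measure condition: $\Delta$ satisfies it with constant $C>0$ if for all $x>0$, $\mu(\{u\in[0,1]:\Delta(u)\le x\})\le Cx$ ($\mu$ Lebesgue measure). For a $C^2$ strictly increasing schedule $u:[0,1]\to[0,1]$ with $u(0)=0,u(1)=1$, set $H^{(k)}(s)=\frac{d^k}{ds^k}H(u(s))=(H_1-H_0)u^{(k)}(s)$ and define $$\mathcal{E}[u]=\frac{\|H^{(1)}(0)\|}{\Delta^2(u(0))}+\frac{\|H^{(1)}(1)\|}{\Delta^2(u(1))}+\int_0^1\Big(\frac{\|H^{(2)}(s)\|}{\Delta^2(u(s))}+\frac{\|H^{(1)}(s)\|^2}{\Delta^3(u(s))}\Big)ds;$$ the adiabatic error bound is $\eta(1)=\frac{c}{T}\mathcal{E}[u]$ with $T>0$ the runtime and $c$ a universal constant. *)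

theory Defs
  imports "HOL-Analysis.Analysis"
begin

text \<open>n x n complex matrices are represented as functions nat => nat => complex,
  only the entries with indices below n being relevant; vectors of C^n likewise
  as nat => complex.\<close>

definition matvec :: "nat \<Rightarrow> (nat \<Rightarrow> nat \<Rightarrow> complex) \<Rightarrow> (nat \<Rightarrow> complex) \<Rightarrow> nat \<Rightarrow> complex" where
  "matvec n M x = (\<lambda>i. \<Sum>j<n. M i j * x j)"

definition vnorm :: "nat \<Rightarrow> (nat \<Rightarrow> complex) \<Rightarrow> real" where
  "vnorm n x = sqrt (\<Sum>i<n. (cmod (x i))\<^sup>2)"

definition opnorm :: "nat \<Rightarrow> (nat \<Rightarrow> nat \<Rightarrow> complex) \<Rightarrow> real" where
  "opnorm n M = (SUP x\<in>{x. vnorm n x \<le> 1}. vnorm n (matvec n M x))"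

definition hermitian :: "nat \<Rightarrow> (nat \<Rightarrow> nat \<Rightarrow> complex) \<Rightarrow> bool" where
  "hermitian n M \<longleftrightarrow> (\<forall>i<n. \<forall>j<n. M i j = cnj (M j i))"

definition eigvec :: "nat \<Rightarrow> (nat \<Rightarrow> nat \<Rightarrow> complex) \<Rightarrow> real \<Rightarrow> (nat \<Rightarrow> complex) \<Rightarrow> bool" where
  "eigvec n M l x \<longleftrightarrow> (\<exists>i<n. x i \<noteq> 0) \<and> (\<forall>i<n. matvec n M x i = complex_of_real l * x i)"

definition eigenvalues :: "nat \<Rightarrow> (nat \<Rightarrow> nat \<Rightarrow> complex) \<Rightarrow> real set" where
  "eigenvalues n M = {l. \<exists>x. eigvec n M l x}"

definition lam1 :: "nat \<Rightarrow> (nat \<Rightarrow> nat \<Rightarrow> complex) \<Rightarrow> real" where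
  "lam1 n M = Min (eigenvalues n M)"

text \<open>lambda_1 is simple: its eigenspace is one-dimensional (for Hermitian matrices
  geometric = algebraic multiplicity)\<close>
definition lam1_simple :: "nat \<Rightarrow> (nat \<Rightarrow> nat \<Rightarrow> complex) \<Rightarrow> bool" where
  "lam1_simple n M \<longleftrightarrow> (\<forall>x y. eigvec n M (lam1 n M) x \<longrightarrow> eigvec n M (lam1 n M) y
       \<longrightarrow> (\<exists>c. \<forall>i<n. y i = c * x i))"

text \<open>second eigenvalue lambda_2 (counted with multiplicity); when lambda_1 is simple
  this is the smallest eigenvalue strictly above lambda_1\<close>
definition lam2 :: "nat \<Rightarrow> (nat \<Rightarrow> nat \<Rightarrow> complex) \<Rightarrow> real" where
  "lam2 n M = Min {l \<in> eigenvalues n M. l > lam1 n M}"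

definition Hint :: "(nat \<Rightarrow> nat \<Rightarrow> complex) \<Rightarrow> (nat \<Rightarrow> nat \<Rightarrow> complex) \<Rightarrow> real \<Rightarrow> nat \<Rightarrow> nat \<Rightarrow> complex" where
  "Hint H0 H1 v = (\<lambda>i j. complex_of_real (1 - v) * H0 i j + complex_of_real v * H1 i j)"

definition gap :: "nat \<Rightarrow> (nat \<Rightarrow> nat \<Rightarrow> complex) \<Rightarrow> (nat \<Rightarrow> nat \<Rightarrow> complex) \<Rightarrow> real \<Rightarrow> real" where
  "gap n H0 H1 v = lam2 n (Hint H0 H1 v) - lam1 n (Hint H0 H1 v)"

definition min_gap :: "nat \<Rightarrow> (nat \<Rightarrow> nat \<Rightarrow> complex) \<Rightarrow> (nat \<Rightarrow> nat \<Rightarrow> complex) \<Rightarrow> real" where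
  "min_gap n H0 H1 = (INF v\<in>{0..1}. gap n H0 H1 v)"

definition measure_condition :: "(real \<Rightarrow> real) \<Rightarrow> real \<Rightarrow> bool" where
  "measure_condition D C \<longleftrightarrow>
     (\<forall>x>0. measure lebesgue {v\<in>{0..1}. D v \<le> x} \<le> C * x)"

definition matdiff :: "(nat \<Rightarrow> nat \<Rightarrow> complex) \<Rightarrow> (nat \<Rightarrow> nat \<Rightarrow> complex) \<Rightarrow> nat \<Rightarrow> nat \<Rightarrow> complex" where
  "matdiff H1 H0 = (\<lambda>i j. H1 i j - H0 i j)"

text \<open>H^(k)(s) = (H1 - H0) u^(k)(s), where uk = u^(k)\<close>
definition Hderiv :: "(nat \<Rightarrow> nat \<Rightarrow> complex) \<Rightarrow> (nat \<Rightarrow> nat \<Rightarrow> complex) \<Rightarrow> (real \<Rightarrow> real) \<Rightarrow> real \<Rightarrow> nat \<Rightarrow> nat \<Rightarrow> complex" where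
  "Hderiv H0 H1 uk s = (\<lambda>i j. complex_of_real (uk s) * matdiff H1 H0 i j)"

text \<open>the functional E[u]; u1, u2 are the first and second derivatives of u\<close>
definition sched_E :: "nat \<Rightarrow> (nat \<Rightarrow> nat \<Rightarrow> complex) \<Rightarrow> (nat \<Rightarrow> nat \<Rightarrow> complex)
     \<Rightarrow> (real \<Rightarrow> real) \<Rightarrow> (real \<Rightarrow> real) \<Rightarrow> (real \<Rightarrow> real) \<Rightarrow> real" where
  "sched_E n H0 H1 u u1 u2 =
     opnorm n (Hderiv H0 H1 u1 0) / (gap n H0 H1 (u 0))\<^sup>2
   + opnorm n (Hderiv H0 H1 u1 1) / (gap n H0 H1 (u 1))\<^sup>2
   + integral {0..1} (\<lambda>s. opnorm n (Hderiv H0 H1 u2 s) / (gap n H0 H1 (u s))\<^sup>2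
                        + (opnorm n (Hderiv H0 H1 u1 s))\<^sup>2 / (gap n H0 H1 (u s)) ^ 3)"

end

theory Submission
  imports Defs "Jordan_Normal_Form.Char_Poly"
begin


definition ip :: "nat \<Rightarrow> (nat \<Rightarrow> complex) \<Rightarrow> (nat \<Rightarrow> complex) \<Rightarrow> complex" where
  "ip n x y = (\<Sum>i<n. cnj (x i) * y i)"

definition nrm2 :: "nat \<Rightarrow> (nat \<Rightarrow> complex) \<Rightarrow> real" where
  "nrm2 n x = (\<Sum>i<n. (cmod (x i))\<^sup>2)"

lemma nrm2_nonneg: "0 \<le> nrm2 n x"
  unfolding nrm2_def by (auto intro: sum_nonneg)

lemma cnj_mult_self: "cnj z * z = complex_of_real ((cmod z)\<^sup>2)"
  by (metis complex_norm_square mult.commute)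

lemma ip_self: "ip n x x = of_real (nrm2 n x)"
  unfolding ip_def nrm2_def of_real_sum by (rule sum.cong) (auto simp only: cnj_mult_self)

lemma vnorm_sq: "(vnorm n x)\<^sup>2 = nrm2 n x"
  unfolding vnorm_def nrm2_def by (simp add: sum_nonneg)

lemma vnorm_nrm2: "vnorm n x = sqrt (nrm2 n x)"
  unfolding vnorm_def nrm2_def by simp

lemma vnorm_L2: "vnorm n x = L2_set (\<lambda>i. cmod (x i)) {..<n}"
  unfolding vnorm_def L2_set_def by simp

lemma nrm2_pos: "(\<exists>i<n. x i \<noteq> 0) \<Longrightarrow> 0 < nrm2 n x"
proof -
  assume "\<exists>i<n. x i \<noteq> 0"
  then obtain i where i: "i < n" "x i \<noteq> 0" by blast
  have "(cmod (x i))\<^sup>2 \<le> nrm2 n x" unfolding nrm2_def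
    by (rule member_le_sum) (use i in auto)
  moreover have "0 < (cmod (x i))\<^sup>2" using i by simp
  ultimately show ?thesis by linarith
qed

lemma nrm2_zero: "nrm2 n x = 0 \<Longrightarrow> i < n \<Longrightarrow> x i = 0"
  using nrm2_pos by force

lemma ip_cnj: "cnj (ip n x y) = ip n y x"
  unfolding ip_def by (simp add: mult.commute)

lemma ip_cs: "cmod (ip n x y) \<le> vnorm n x * vnorm n y"
proof -
  have "cmod (ip n x y) \<le> (\<Sum>i<n. cmod (cnj (x i) * y i))"
    unfolding ip_def by (rule norm_sum)
  also have "\<dots> = (\<Sum>i<n. \<bar>cmod (x i)\<bar> * \<bar>cmod (y i)\<bar>)" by (simp add: norm_mult)
  also have "\<dots> \<le> vnorm n x * vnorm n y" unfolding vnorm_L2 by (rule L2_set_mult_ineq)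
  finally show ?thesis .
qed

lemma matvec_herm:
  assumes "hermitian n H"
  shows "ip n x (matvec n H y) = ip n (matvec n H x) y"
proof -
  have "ip n x (matvec n H y) = (\<Sum>i<n. \<Sum>j<n. cnj (x i) * H i j * y j)"
    unfolding ip_def matvec_def by (simp add: sum_distrib_left mult.assoc)
  also have "\<dots> = (\<Sum>j<n. \<Sum>i<n. cnj (x i) * H i j * y j)" by (rule sum.swap)
  also have "\<dots> = ip n (matvec n H x) y"
    unfolding ip_def matvec_def cnj_sum sum_distrib_right
  proof (rule sum.cong[OF refl], rule sum.cong[OF refl])
    fix i j assume "j \<in> {..<n}" "i \<in> {..<n}"
    hence "H j i = cnj (H i j)" using assms unfolding hermitian_def by blast
    hence h: "cnj (H j i) = H i j" by simp
    show "cnj (x i) * H i j * y j = cnj (H j i * x i) * y j"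
      by (simp add: h mult_ac)
  qed
  finally show ?thesis .
qed

lemma ip_herm_real:
  assumes "hermitian n H"
  shows "cnj (ip n x (matvec n H x)) = ip n x (matvec n H x)"
  by (metis assms ip_cnj matvec_herm)

lemma ip_add_right: "ip n x (\<lambda>i. y i + z i) = ip n x y + ip n x z"
  unfolding ip_def by (simp add: distrib_left sum.distrib)
lemma ip_add_left: "ip n (\<lambda>i. y i + z i) x = ip n y x + ip n z x"
  unfolding ip_def by (simp add: distrib_right sum.distrib)
lemma ip_scale_right: "ip n x (\<lambda>i. c * y i) = c * ip n x y"
  unfolding ip_def by (simp add: sum_distrib_left mult.left_commute)
lemma ip_scale_left: "ip n (\<lambda>i. c * y i) x = cnj c * ip n y x"
  unfolding ip_def by (simp add: sum_distrib_left mult.assoc)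
lemma matvec_add: "matvec n M (\<lambda>i. y i + z i) = (\<lambda>i. matvec n M y i + matvec n M z i)"
  unfolding matvec_def by (intro ext) (simp add: distrib_left sum.distrib)
lemma matvec_scale: "matvec n M (\<lambda>i. c * y i) = (\<lambda>i. c * matvec n M y i)"
  unfolding matvec_def by (intro ext) (simp add: sum_distrib_left mult.left_commute)
lemma matvec_mscale: "matvec n (\<lambda>i j. c * M i j) y = (\<lambda>i. c * matvec n M y i)"
  unfolding matvec_def by (intro ext) (simp add: sum_distrib_left mult.assoc)
lemma vnorm_scale: "vnorm n (\<lambda>i. c * y i) = cmod c * vnorm n y"
  unfolding vnorm_def by (simp add: norm_mult power_mult_distrib sum_distrib_left[symmetric] real_sqrt_mult)

lemma ip_cong: "(\<And>i. i < n \<Longrightarrow> y i = z i) \<Longrightarrow> ip n x y = ip n x z"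
  unfolding ip_def by (intro sum.cong) auto
lemma ip_cong_left: "(\<And>i. i < n \<Longrightarrow> y i = z i) \<Longrightarrow> ip n y x = ip n z x"
  unfolding ip_def by (intro sum.cong) auto

lemma opnorm_bdd: "bdd_above ((\<lambda>x. vnorm n (matvec n M x)) ` {x. vnorm n x \<le> 1})"
proof (rule bdd_aboveI2)
  fix x assume "x \<in> {x. vnorm n x \<le> 1}"
  hence x1: "vnorm n x \<le> 1" by simp
  have xj: "cmod (x j) \<le> 1" if "j < n" for j
  proof -
    have "cmod (x j) \<le> vnorm n x" unfolding vnorm_L2
      by (rule member_le_L2_set) (use that in auto)
    with x1 show ?thesis by linarith
  qed
  have "vnorm n (matvec n M x) \<le> (\<Sum>i<n. cmod (matvec n M x i))"
    unfolding vnorm_L2 by (rule L2_set_le_sum) simp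
  also have "\<dots> \<le> (\<Sum>i<n. \<Sum>j<n. cmod (M i j))"
  proof (rule sum_mono)
    fix i assume "i \<in> {..<n}"
    have "cmod (matvec n M x i) \<le> (\<Sum>j<n. cmod (M i j * x j))"
      unfolding matvec_def by (rule norm_sum)
    also have "\<dots> \<le> (\<Sum>j<n. cmod (M i j))"
    proof (rule sum_mono)
      fix j assume "j \<in> {..<n}"
      hence "cmod (x j) \<le> 1" using xj by simp
      thus "cmod (M i j * x j) \<le> cmod (M i j)" unfolding norm_mult
        by (rule mult_left_le) simp
    qed
    finally show "cmod (matvec n M x i) \<le> (\<Sum>j<n. cmod (M i j))" .
  qed
  finally show "vnorm n (matvec n M x) \<le> (\<Sum>i<n. \<Sum>j<n. cmod (M i j))" .
qed

lemma vnorm_zero_matvec: "vnorm n x = 0 \<Longrightarrow> vnorm n (matvec n M x) = 0"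
proof -
  assume "vnorm n x = 0"
  hence "nrm2 n x = 0" using vnorm_sq by (metis zero_power2)
  hence "\<forall>j<n. x j = 0" using nrm2_zero by blast
  hence "matvec n M x = (\<lambda>i. 0)" unfolding matvec_def by auto
  thus ?thesis unfolding vnorm_def by simp
qed

lemma vnorm_nonneg: "0 \<le> vnorm n x" unfolding vnorm_def by (simp add: sum_nonneg)

lemma opnorm_nonneg: "0 \<le> opnorm n M"
proof -
  have "vnorm n (\<lambda>i. 0) = 0" unfolding vnorm_def by simp
  hence "vnorm n (matvec n M (\<lambda>i. 0)) = 0" by (rule vnorm_zero_matvec)
  moreover have "vnorm n (matvec n M (\<lambda>i. 0)) \<le> opnorm n M" unfolding opnorm_def
    by (rule cSUP_upper[OF _ opnorm_bdd]) (simp add: \<open>vnorm n (\<lambda>i. 0) = 0\<close>)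
  ultimately show ?thesis by simp
qed

lemma opnorm_bound: "vnorm n (matvec n M x) \<le> opnorm n M * vnorm n x"
proof (cases "vnorm n x = 0")
  case True thus ?thesis using vnorm_zero_matvec by simp
next
  case False
  hence r: "0 < vnorm n x" using vnorm_nonneg[of n x] by linarith
  define y where "y = (\<lambda>i. complex_of_real (1 / vnorm n x) * x i)"
  have vy: "vnorm n y = 1" unfolding y_def vnorm_scale using r by (simp add: norm_divide)
  have "vnorm n (matvec n M y) \<le> opnorm n M" unfolding opnorm_def
    by (rule cSUP_upper[OF _ opnorm_bdd]) (simp add: vy)
  moreover have "vnorm n (matvec n M y) = vnorm n (matvec n M x) / vnorm n x"
    unfolding y_def matvec_scale vnorm_scale using r by (simp add: norm_divide)
  ultimately show ?thesis using r by (simp add: divide_le_eq)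
qed

lemma opnorm_scale: "opnorm n (\<lambda>i j. c * M i j) = cmod c * opnorm n M"
proof -
  let ?S = "{x. vnorm n x \<le> 1}"
  have "(\<lambda>i. 0) \<in> ?S" by (simp add: vnorm_def)
  hence ne: "?S \<noteq> {}" by blast
  have eq: "opnorm n (\<lambda>i j. c * M i j) = (SUP x\<in>?S. cmod c * vnorm n (matvec n M x))"
    unfolding opnorm_def matvec_mscale vnorm_scale ..
  show ?thesis unfolding eq
  proof (rule antisym)
    show "(SUP x\<in>?S. cmod c * vnorm n (matvec n M x)) \<le> cmod c * opnorm n M"
    proof (rule cSUP_least[OF ne])
      fix x assume "x \<in> ?S"
      hence "vnorm n (matvec n M x) \<le> opnorm n M" unfolding opnorm_def by (rule cSUP_upper[OF _ opnorm_bdd])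
      thus "cmod c * vnorm n (matvec n M x) \<le> cmod c * opnorm n M" by (simp add: mult_left_mono)
    qed
    show "cmod c * opnorm n M \<le> (SUP x\<in>?S. cmod c * vnorm n (matvec n M x))"
    proof (cases "c = 0")
      case True
      have "0 \<le> (SUP x\<in>?S. cmod c * vnorm n (matvec n M x))"
        using True ne by (simp add: cSUP_const)
      thus ?thesis using True by simp
    next
      case False
      have bdd: "bdd_above ((\<lambda>x. cmod c * vnorm n (matvec n M x)) ` ?S)"
      proof -
        obtain B where B: "\<And>x. vnorm n x \<le> 1 \<Longrightarrow> vnorm n (matvec n M x) \<le> B"
          using opnorm_bdd[of n M] unfolding bdd_above_def by auto
        show ?thesis
          by (rule bdd_aboveI2[where M="cmod c * B"]) (auto intro: mult_left_mono B)
      qed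
      have "opnorm n M \<le> (SUP x\<in>?S. cmod c * vnorm n (matvec n M x)) / cmod c"
        unfolding opnorm_def
      proof (rule cSUP_least[OF ne])
        fix x assume "x \<in> ?S"
        hence "cmod c * vnorm n (matvec n M x) \<le> (SUP x\<in>?S. cmod c * vnorm n (matvec n M x))"
          by (rule cSUP_upper[OF _ bdd])
        thus "vnorm n (matvec n M x) \<le> (SUP x\<in>?S. cmod c * vnorm n (matvec n M x)) / cmod c"
          using False by (simp add: le_divide_eq mult.commute)
      qed
      thus ?thesis using False by (simp add: le_divide_eq mult.commute)
    qed
  qed
qed

lemma ip_opnorm: "cmod (ip n x (matvec n M x)) \<le> opnorm n M * nrm2 n x"
proof -
  have "cmod (ip n x (matvec n M x)) \<le> vnorm n x * vnorm n (matvec n M x)" by (rule ip_cs)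
  also have "\<dots> \<le> vnorm n x * (opnorm n M * vnorm n x)"
    by (rule mult_left_mono[OF opnorm_bound vnorm_nonneg])
  also have "\<dots> = opnorm n M * (vnorm n x * vnorm n x)" by (simp only: mult_ac)
  also have "\<dots> = opnorm n M * nrm2 n x" by (metis vnorm_sq power2_eq_square)
  finally show ?thesis .
qed



lemma coord_cont [continuous_intros]: "continuous_on S (\<lambda>x::nat \<Rightarrow> complex. x i)"
  by (rule continuous_on_subset[OF continuous_on_product_coordinates]) simp

definition trunc :: "nat \<Rightarrow> (nat \<Rightarrow> complex) \<Rightarrow> nat \<Rightarrow> complex" where
  "trunc n x = (\<lambda>i. if i < n then x i else 0)"

lemma ip_trunc_l: "ip n (trunc n x) y = ip n x y" unfolding ip_def trunc_def by simp
lemma ip_trunc_r: "ip n y (trunc n x) = ip n y x" unfolding ip_def trunc_def by simp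
lemma nrm2_trunc: "nrm2 n (trunc n x) = nrm2 n x" unfolding nrm2_def trunc_def by simp
lemma matvec_trunc: "matvec n M (trunc n x) = matvec n M x" unfolding matvec_def trunc_def
  by (intro ext) simp

definition Rq :: "nat \<Rightarrow> (nat \<Rightarrow> nat \<Rightarrow> complex) \<Rightarrow> (nat \<Rightarrow> complex) \<Rightarrow> real" where
  "Rq n H x = Re (ip n x (matvec n H x))"

lemma Rq_scale: "Rq n H (\<lambda>i. complex_of_real c * x i) = c\<^sup>2 * Rq n H x"
  unfolding Rq_def matvec_scale ip_scale_left ip_scale_right by (simp add: power2_eq_square)

lemma nrm2_scale: "nrm2 n (\<lambda>i. c * x i) = (cmod c)\<^sup>2 * nrm2 n x"
  unfolding nrm2_def by (simp add: norm_mult power_mult_distrib sum_distrib_left)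

lemma Rq_trunc: "Rq n H (trunc n x) = Rq n H x"
  unfolding Rq_def matvec_trunc ip_trunc_l ..

lemma nrm2_le: "i < n \<Longrightarrow> cmod (x i) \<le> sqrt (nrm2 n x)"
proof -
  assume "i < n"
  hence "(cmod (x i))\<^sup>2 \<le> nrm2 n x" unfolding nrm2_def by (intro member_le_sum) auto
  thus ?thesis by (simp add: real_le_rsqrt)
qed

lemma cont_nrm2: "continuous_on S (nrm2 n)"
  unfolding nrm2_def by (intro continuous_intros)
lemma cont_ip: "continuous_on S (\<lambda>x. ip n e x)"
  unfolding ip_def by (intro continuous_intros)
lemma cont_Rq: "continuous_on S (Rq n H)"
  unfolding Rq_def ip_def matvec_def by (intro continuous_intros)

lemma compact_K: "compact (PiE UNIV (\<lambda>i. if i < n then cball (0::complex) 1 else {0}))"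
proof -
  have "compactin (product_topology (\<lambda>i. euclidean) UNIV) (PiE UNIV (\<lambda>i. if i < n then cball (0::complex) 1 else {0}))"
    unfolding compactin_PiE by auto
  thus ?thesis unfolding euclidean_product_topology by simp
qed

lemma min_exists:
  assumes x0: "nrm2 n x0 = 1" "ip n e x0 = 0"
  shows "\<exists>x. nrm2 n x = 1 \<and> ip n e x = 0 \<and>
     (\<forall>y. nrm2 n y = 1 \<and> ip n e y = 0 \<longrightarrow> Rq n H x \<le> Rq n H y)"
proof -
  define K where "K = PiE UNIV (\<lambda>i. if i < n then cball (0::complex) 1 else {0})"
  define S where "S = K \<inter> {x. nrm2 n x = 1} \<inter> {x. ip n e x = 0}"
  have inK: "trunc n y \<in> K" if "nrm2 n y = 1" for y
    unfolding K_def trunc_def using nrm2_le[of _ n y] that by (auto simp: PiE_iff)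
  have "compact S" unfolding S_def K_def
    by (intro compact_Int_closed compact_K closed_Collect_eq cont_nrm2 cont_ip continuous_intros)
  moreover have "trunc n x0 \<in> S" unfolding S_def using inK x0 by (simp add: nrm2_trunc ip_trunc_r)
  hence "S \<noteq> {}" by blast
  ultimately obtain x where x: "x \<in> S" and xm: "\<And>y. y \<in> S \<Longrightarrow> Rq n H x \<le> Rq n H y"
    using continuous_attains_inf[of S "Rq n H"] cont_Rq by blast
  show ?thesis
  proof (intro exI conjI allI impI)
    show "nrm2 n x = 1" "ip n e x = 0" using x unfolding S_def by auto
    fix y assume y: "nrm2 n y = 1 \<and> ip n e y = 0"
    hence "trunc n y \<in> S" unfolding S_def using inK by (simp add: nrm2_trunc ip_trunc_r)
    thus "Rq n H x \<le> Rq n H y" using xm Rq_trunc by metis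
  qed
qed



definition shiftm :: "(nat \<Rightarrow> nat \<Rightarrow> complex) \<Rightarrow> real \<Rightarrow> nat \<Rightarrow> nat \<Rightarrow> complex" where
  "shiftm H m = (\<lambda>i j. H i j - (if i = j then complex_of_real m else 0))"

lemma matvec_shiftm: "i < n \<Longrightarrow> matvec n (shiftm H m) z i = matvec n H z i - of_real m * z i"
proof -
  assume i: "i < n"
  have "(\<Sum>j<n. (if i = j then complex_of_real m else 0) * z j) = (\<Sum>j<n. if i = j then complex_of_real m * z j else 0)"
    by (rule sum.cong) auto
  also have "\<dots> = of_real m * z i" using i by simp
  finally show ?thesis unfolding matvec_def shiftm_def left_diff_distrib sum_subtractf by simp
qed

lemma herm_shiftm: "hermitian n H \<Longrightarrow> hermitian n (shiftm H m)"
  unfolding hermitian_def shiftm_def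
proof (intro allI impI)
  fix i j assume h: "\<forall>i<n. \<forall>j<n. H i j = cnj (H j i)" and ij: "i < n" "j < n"
  hence "H i j = cnj (H j i)" by blast
  thus "H i j - (if i = j then complex_of_real m else 0) = cnj (H j i - (if j = i then complex_of_real m else 0))"
    by simp
qed

lemma ip_diff_right: "ip n x (\<lambda>i. y i - z i) = ip n x y - ip n x z"
  unfolding ip_def by (simp add: right_diff_distrib sum_subtractf)

lemma Rq_shiftm: "Rq n (shiftm H m) z = Rq n H z - m * nrm2 n z"
proof -
  have "ip n z (matvec n (shiftm H m) z) = ip n z (\<lambda>i. matvec n H z i - of_real m * z i)"
    by (rule ip_cong) (simp add: matvec_shiftm)
  also have "\<dots> = ip n z (matvec n H z) - of_real m * of_real (nrm2 n z)"
    by (simp add: ip_diff_right ip_scale_right ip_self)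
  finally show ?thesis unfolding Rq_def by simp
qed

lemma Rq_expand:
  assumes "hermitian n H"
  shows "Rq n H (\<lambda>i. x i + complex_of_real t * y i)
     = Rq n H x + 2 * t * Re (ip n y (matvec n H x)) + t\<^sup>2 * Rq n H y"
proof -
  have c: "ip n x (matvec n H y) = cnj (ip n y (matvec n H x))"
    using matvec_herm[OF assms] ip_cnj by metis
  have "ip n (\<lambda>i. x i + complex_of_real t * y i) (matvec n H (\<lambda>i. x i + complex_of_real t * y i))
     = ip n x (matvec n H x) + of_real t * ip n x (matvec n H y) + of_real t * ip n y (matvec n H x)
       + of_real t * of_real t * ip n y (matvec n H y)"
    unfolding matvec_add matvec_scale ip_add_left ip_add_right ip_scale_left ip_scale_right
    by (simp add: algebra_simps)
  thus ?thesis unfolding Rq_def c by (simp add: power2_eq_square)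
qed

lemma quad_zero:
  fixes a b :: real
  assumes "b \<ge> 0" "\<And>t. 0 \<le> 2 * t * a + t\<^sup>2 * b"
  shows "a = 0"
proof (rule ccontr)
  assume a: "a \<noteq> 0"
  define t where "t = - a / (b + 1)"
  have bp: "b + 1 \<noteq> 0" using assms(1) by linarith
  have "0 \<le> (b + 1)\<^sup>2 * (2 * t * a + t\<^sup>2 * b)" using assms(2)[of t] by simp
  also have "(b + 1)\<^sup>2 * (2 * t * a + t\<^sup>2 * b) = - (a\<^sup>2 * (b + 2))"
  proof -
    have e1: "(b + 1) * t = - a" unfolding t_def using bp by simp
    have "(b + 1)\<^sup>2 * (2 * t * a + t\<^sup>2 * b) = 2 * a * (b + 1) * ((b + 1) * t) + ((b + 1) * t)\<^sup>2 * b"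
      by (simp add: algebra_simps power2_eq_square)
    also have "\<dots> = - (a\<^sup>2 * (b + 2))" unfolding e1 by (simp add: algebra_simps power2_eq_square)
    finally show ?thesis .
  qed
  also have "\<dots> < 0" using a assms(1) by (simp add: add_pos_nonneg)
  finally show False by simp
qed

lemma min_eig:
  assumes herm: "hermitian n H" and ee: "\<forall>i<n. matvec n H e i = of_real mu * e i"
    and x0: "nrm2 n x0 = 1" "ip n e x0 = 0"
  shows "\<exists>m x. eigvec n H m x \<and> ip n e x = 0 \<and>
      (\<forall>z. ip n e z = 0 \<longrightarrow> m * nrm2 n z \<le> Rq n H z)"
proof -
  obtain x where x1: "nrm2 n x = 1" and xe: "ip n e x = 0"
     and xm: "\<And>y. nrm2 n y = 1 \<Longrightarrow> ip n e y = 0 \<Longrightarrow> Rq n H x \<le> Rq n H y"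
    using min_exists[OF x0] by blast
  define m where "m = Rq n H x"
  have Q: "m * nrm2 n z \<le> Rq n H z" if ze: "ip n e z = 0" for z
  proof (cases "nrm2 n z = 0")
    case True
    hence "\<forall>i<n. z i = 0" using nrm2_zero by blast
    hence "Rq n H z = 0" unfolding Rq_def ip_def by simp
    thus ?thesis using True by simp
  next
    case False
    hence pos: "0 < nrm2 n z" using nrm2_nonneg[of n z] by linarith
    define r where "r = sqrt (nrm2 n z)"
    have r: "0 < r" "r\<^sup>2 = nrm2 n z" unfolding r_def using pos by auto
    define w where "w = (\<lambda>i. complex_of_real (1 / r) * z i)"
    have "nrm2 n w = 1" unfolding w_def nrm2_scale r(2)[symmetric] using r pos by (simp add: norm_divide power_divide)
    moreover have "ip n e w = 0" unfolding w_def ip_scale_right ze by simp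
    ultimately have "Rq n H x \<le> Rq n H w" by (rule xm)
    also have "Rq n H w = Rq n H z / r\<^sup>2" unfolding w_def Rq_scale by (simp add: power_divide)
    finally have "m * r\<^sup>2 \<le> Rq n H z" unfolding m_def using r pos by (simp add: le_divide_eq)
    thus ?thesis using r by simp
  qed
  let ?G = "shiftm H m"
  have hG: "hermitian n ?G" by (rule herm_shiftm[OF herm])
  have Gx: "Rq n ?G x = 0" unfolding Rq_shiftm m_def x1 by simp
  have Gpos: "0 \<le> Rq n ?G z" if "ip n e z = 0" for z
    using Q[OF that] unfolding Rq_shiftm by simp
  have orth: "ip n y (matvec n ?G x) = 0" if ye: "ip n e y = 0" for y
  proof -
    have re: "Re (ip n y' (matvec n ?G x)) = 0" if ye': "ip n e y' = 0" for y'
    proof (rule quad_zero)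
      show "0 \<le> Rq n ?G y'" by (rule Gpos[OF ye'])
      fix t
      have "ip n e (\<lambda>i. x i + complex_of_real t * y' i) = 0"
        unfolding ip_add_right ip_scale_right xe ye' by simp
      hence "0 \<le> Rq n ?G (\<lambda>i. x i + complex_of_real t * y' i)" by (rule Gpos)
      thus "0 \<le> 2 * t * Re (ip n y' (matvec n ?G x)) + t\<^sup>2 * Rq n ?G y'"
        unfolding Rq_expand[OF hG] Gx by simp
    qed
    have a: "Re (ip n y (matvec n ?G x)) = 0" by (rule re[OF ye])
    have "ip n e (\<lambda>i. \<i> * y i) = 0" unfolding ip_scale_right ye by simp
    hence "Re (ip n (\<lambda>i. \<i> * y i) (matvec n ?G x)) = 0" by (rule re)
    hence b: "Im (ip n y (matvec n ?G x)) = 0" unfolding ip_scale_left by simp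
    show ?thesis using a b complex_eq_iff by auto
  qed
  define w where "w = matvec n ?G x"
  have "ip n e w = ip n (matvec n ?G e) x" unfolding w_def by (rule matvec_herm[OF hG])
  also have "\<dots> = ip n (\<lambda>i. complex_of_real (mu - m) * e i) x"
    by (rule ip_cong_left) (simp add: matvec_shiftm ee left_diff_distrib)
  also have "\<dots> = 0" unfolding ip_scale_left xe by simp
  finally have "ip n w w = 0" using orth unfolding w_def by blast
  hence "nrm2 n w = 0" unfolding ip_self by simp
  hence w0: "\<forall>i<n. w i = 0" using nrm2_zero by blast
  have eig: "eigvec n H m x"
    unfolding eigvec_def
  proof
    show "\<exists>i<n. x i \<noteq> 0" using x1 unfolding nrm2_def by (metis (no_types, lifting) lessThan_iff sum.neutral norm_zero power_zero_numeral zero_neq_one)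
    show "\<forall>i<n. matvec n H x i = complex_of_real m * x i"
      using w0 unfolding w_def by (simp add: matvec_shiftm)
  qed
  show ?thesis using eig xe Q by blast
qed



lemma eig_finite: "finite (eigenvalues n H)"
proof -
  define A where "A = Matrix.mat n n (\<lambda>(i,j). H i j)"
  have A: "A \<in> carrier_mat n n" unfolding A_def by simp
  define cp where "cp = char_poly A"
  have cp0: "cp \<noteq> 0" using degree_monic_char_poly[OF A] unfolding cp_def by auto
  have sub: "complex_of_real ` eigenvalues n H \<subseteq> {z. poly cp z = 0}"
  proof
    fix z assume "z \<in> complex_of_real ` eigenvalues n H"
    then obtain l x where z: "z = complex_of_real l" and ev: "eigvec n H l x"
      unfolding eigenvalues_def by blast
    define v where "v = Matrix.vec n x"
    have "eigenvector A v z" unfolding eigenvector_def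
    proof (intro conjI)
      show "v \<in> carrier_vec (dim_row A)" unfolding v_def A_def by simp
      show "v \<noteq> 0\<^sub>v (dim_row A)"
      proof
        assume "v = 0\<^sub>v (dim_row A)"
        hence "\<forall>i<n. x i = 0" unfolding v_def A_def
          by (metis dim_row_mat(1) index_vec index_zero_vec(1))
        thus False using ev unfolding eigvec_def by blast
      qed
      show "A *\<^sub>v v = z \<cdot>\<^sub>v v"
      proof (rule eq_vecI)
        fix i assume "i < dim_vec (z \<cdot>\<^sub>v v)"
        hence i: "i < n" unfolding v_def by simp
        have "(A *\<^sub>v v) $ i = (\<Sum>j\<in>{0..<n}. H i j * x j)"
          unfolding A_def v_def using i by (simp add: scalar_prod_def)
        also have "\<dots> = matvec n H x i" unfolding matvec_def by (simp add: atLeast0LessThan)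
        also have "\<dots> = z * x i" using ev i z unfolding eigvec_def by simp
        also have "\<dots> = (z \<cdot>\<^sub>v v) $ i" unfolding v_def using i by simp
        finally show "(A *\<^sub>v v) $ i = (z \<cdot>\<^sub>v v) $ i" .
      qed (simp add: A_def v_def)
    qed
    hence "eigenvalue A z" unfolding eigenvalue_def by blast
    thus "z \<in> {z. poly cp z = 0}" using eigenvalue_root_char_poly[OF A] unfolding cp_def by simp
  qed
  have "finite (complex_of_real ` eigenvalues n H)"
    by (rule finite_subset[OF sub poly_roots_finite[OF cp0]])
  thus ?thesis using finite_imageD inj_on_def by (metis of_real_eq_iff)
qed



lemma eigvec_ip: "eigvec n H l x \<Longrightarrow> ip n y (matvec n H x) = of_real l * ip n y x"
proof -
  assume "eigvec n H l x"
  hence "ip n y (matvec n H x) = ip n y (\<lambda>i. of_real l * x i)"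
    unfolding eigvec_def by (intro ip_cong) auto
  thus ?thesis by (simp add: ip_scale_right)
qed

lemma eigvec_Rq: "eigvec n H l x \<Longrightarrow> Rq n H x = l * nrm2 n x"
  unfolding Rq_def by (simp add: eigvec_ip ip_self)

lemma eigvec_nrm2: "eigvec n H l x \<Longrightarrow> 0 < nrm2 n x"
  unfolding eigvec_def using nrm2_pos by blast

lemma eigvec_orth:
  assumes "hermitian n H" "eigvec n H l1 x" "eigvec n H l2 y" "l1 \<noteq> l2"
  shows "ip n x y = 0"
proof -
  have "ip n x (matvec n H y) = of_real l2 * ip n x y" by (rule eigvec_ip[OF assms(3)])
  moreover have "ip n x (matvec n H y) = ip n (matvec n H x) y" by (rule matvec_herm[OF assms(1)])
  moreover have "ip n (matvec n H x) y = cnj (ip n y (matvec n H x))" using ip_cnj by metis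
  moreover have "\<dots> = of_real l1 * ip n x y" using eigvec_ip[OF assms(2), of y] ip_cnj[of n y x] by simp
  ultimately have "(of_real l1 - of_real l2) * ip n x y = 0" by (simp add: algebra_simps)
  thus ?thesis using assms(4) by simp
qed

lemma unit_vec: "0 < n \<Longrightarrow> nrm2 n (\<lambda>i. if i = 0 then 1 else 0) = 1"
proof -
  assume n: "0 < n"
  have "nrm2 n (\<lambda>i. if i = 0 then 1 else 0) = (\<Sum>i<n. if i = 0 then 1 else 0)"
    unfolding nrm2_def by (rule sum.cong) auto
  also have "\<dots> = 1" using n by simp
  finally show ?thesis .
qed

lemma normalize:
  assumes "0 < nrm2 n v" "ip n e v = 0"
  shows "\<exists>x. nrm2 n x = 1 \<and> ip n e x = 0"
proof -
  define x where "x = (\<lambda>i. complex_of_real (1 / sqrt (nrm2 n v)) * v i)"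
  have "nrm2 n x = 1" unfolding x_def nrm2_scale using assms(1) by (simp add: norm_divide power_divide)
  moreover have "ip n e x = 0" unfolding x_def ip_scale_right assms(2) by simp
  ultimately show ?thesis by blast
qed

lemma lam1_props:
  assumes herm: "hermitian n H" and n: "0 < n"
  shows "(\<exists>x. eigvec n H (lam1 n H) x) \<and> (\<forall>z. lam1 n H * nrm2 n z \<le> Rq n H z)"
proof -
  have "\<exists>m x. eigvec n H m x \<and> ip n (\<lambda>i. 0) x = 0 \<and>
      (\<forall>z. ip n (\<lambda>i. 0) z = 0 \<longrightarrow> m * nrm2 n z \<le> Rq n H z)"
    by (rule min_eig[OF herm, of _ 0 "\<lambda>i. if i = 0 then 1 else 0"])
       (auto simp: matvec_def ip_def unit_vec[OF n])
  then obtain m x where ev: "eigvec n H m x" and Q: "\<And>z. m * nrm2 n z \<le> Rq n H z"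
    by (auto simp: ip_def)
  have mem: "m \<in> eigenvalues n H" unfolding eigenvalues_def using ev by blast
  have "lam1 n H = m" unfolding lam1_def
  proof (rule Min_eqI[OF eig_finite _ mem])
    fix l assume "l \<in> eigenvalues n H"
    then obtain y where y: "eigvec n H l y" unfolding eigenvalues_def by blast
    have "m * nrm2 n y \<le> l * nrm2 n y" using Q[of y] eigvec_Rq[OF y] by simp
    thus "m \<le> l" using eigvec_nrm2[OF y] by simp
  qed
  thus ?thesis using ev Q by blast
qed

lemma orth_exists:
  assumes n: "2 \<le> n"
  shows "\<exists>v. 0 < nrm2 n v \<and> ip n e v = 0"
proof (cases "e 0 = 0 \<and> e 1 = 0")
  case True
  define v where "v = (\<lambda>i::nat. if i = 0 then (1::complex) else 0)"
  have "0 < nrm2 n v" unfolding v_def using unit_vec[of n] n by simp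
  moreover have "ip n e v = 0"
  proof -
    have "ip n e v = (\<Sum>i<n. if i = 0 then cnj (e 0) else 0)"
      unfolding ip_def v_def by (rule sum.cong) auto
    also have "\<dots> = 0" using True by simp
    finally show ?thesis .
  qed
  ultimately show ?thesis by blast
next
  case False
  define v where "v = (\<lambda>i::nat. if i = 0 then cnj (e 1) else if i = 1 then - cnj (e 0) else 0)"
  have "\<exists>i<n. v i \<noteq> 0"
  proof (cases "e 1 = 0")
    case True
    hence "v 1 \<noteq> 0" using False unfolding v_def by simp
    moreover have "1 < n" using n by simp
    ultimately show ?thesis by blast
  next
    case f: False
    hence "v 0 \<noteq> 0" unfolding v_def by simp
    moreover have "0 < n" using n by simp
    ultimately show ?thesis by blast
  qed
  hence "0 < nrm2 n v" by (rule nrm2_pos)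
  moreover have "ip n e v = 0"
  proof -
    have "ip n e v = (\<Sum>i<2. cnj (e i) * v i)" unfolding ip_def
      by (rule sum.mono_neutral_right) (use n in \<open>auto simp: v_def\<close>)
    also have "\<dots> = 0" by (simp add: v_def numeral_2_eq_2)
    finally show ?thesis .
  qed
  ultimately show ?thesis by blast
qed

lemma lam2_props:
  assumes herm: "hermitian n H" and n: "2 \<le> n" and simple: "lam1_simple n H"
  shows "\<exists>e1. eigvec n H (lam1 n H) e1 \<and> (\<forall>z. ip n e1 z = 0 \<longrightarrow> lam2 n H * nrm2 n z \<le> Rq n H z)"
    and "(\<exists>e2. eigvec n H (lam2 n H) e2) \<and> lam1 n H < lam2 n H"
proof -
  obtain e1 where e1: "eigvec n H (lam1 n H) e1" and L1: "\<And>z. lam1 n H * nrm2 n z \<le> Rq n H z"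
    using lam1_props[OF herm] n by auto
  obtain v where "0 < nrm2 n v" "ip n e1 v = 0" using orth_exists[OF n] by blast
  then obtain x0 where x0: "nrm2 n x0 = 1" "ip n e1 x0 = 0" using normalize by blast
  have "\<forall>i<n. matvec n H e1 i = of_real (lam1 n H) * e1 i" using e1 unfolding eigvec_def by blast
  from min_eig[OF herm this x0] obtain m x where ev: "eigvec n H m x" and xe: "ip n e1 x = 0"
    and Q: "\<And>z. ip n e1 z = 0 \<Longrightarrow> m * nrm2 n z \<le> Rq n H z" by blast
  have "lam1 n H * nrm2 n x \<le> m * nrm2 n x" using L1[of x] eigvec_Rq[OF ev] by simp
  hence ge: "lam1 n H \<le> m" using eigvec_nrm2[OF ev] by simp
  have ne: "m \<noteq> lam1 n H"
  proof
    assume "m = lam1 n H"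
    then obtain c where c: "\<forall>i<n. x i = c * e1 i" using simple ev e1 unfolding lam1_simple_def by blast
    have "ip n e1 x = ip n e1 (\<lambda>i. c * e1 i)" by (rule ip_cong) (use c in auto)
    hence "c * of_real (nrm2 n e1) = 0" using xe by (simp add: ip_scale_right ip_self)
    hence "c = 0" using eigvec_nrm2[OF e1] by simp
    thus False using c ev unfolding eigvec_def by auto
  qed
  define L where "L = {l \<in> eigenvalues n H. l > lam1 n H}"
  have finL: "finite L" unfolding L_def using eig_finite by simp
  have mL: "m \<in> L" unfolding L_def eigenvalues_def using ev ge ne by auto
  hence "L \<noteq> {}" by blast
  have l2: "lam2 n H = Min L" unfolding lam2_def L_def ..
  have le: "lam2 n H \<le> m" unfolding l2 using Min_le[OF finL mL] .
  have inL: "lam2 n H \<in> L" unfolding l2 using Min_in[OF finL \<open>L \<noteq> {}\<close>] .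
  show "\<exists>e1. eigvec n H (lam1 n H) e1 \<and> (\<forall>z. ip n e1 z = 0 \<longrightarrow> lam2 n H * nrm2 n z \<le> Rq n H z)"
  proof (intro exI conjI allI impI)
    show "eigvec n H (lam1 n H) e1" by (rule e1)
    fix z assume "ip n e1 z = 0"
    hence "m * nrm2 n z \<le> Rq n H z" by (rule Q)
    moreover have "lam2 n H * nrm2 n z \<le> m * nrm2 n z" by (rule mult_right_mono[OF le nrm2_nonneg])
    ultimately show "lam2 n H * nrm2 n z \<le> Rq n H z" by linarith
  qed
  show "(\<exists>e2. eigvec n H (lam2 n H) e2) \<and> lam1 n H < lam2 n H"
    using inL unfolding L_def eigenvalues_def by auto
qed

lemma lam2_upper:
  assumes herm: "hermitian n H" and n: "2 \<le> n" and simple: "lam1_simple n H"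
  shows "\<exists>x. 0 < nrm2 n x \<and> ip n y x = 0 \<and> Rq n H x \<le> lam2 n H * nrm2 n x"
proof -
  obtain e1 where e1: "eigvec n H (lam1 n H) e1" using lam2_props(1)[OF assms] by blast
  obtain e2 where e2: "eigvec n H (lam2 n H) e2" and lt: "lam1 n H < lam2 n H"
    using lam2_props(2)[OF assms] by blast
  have o12: "ip n e1 e2 = 0" by (rule eigvec_orth[OF herm e1 e2]) (use lt in simp)
  have o21: "ip n e2 e1 = 0" using o12 ip_cnj by (metis complex_cnj_zero)
  define a where "a = ip n y e2"
  define b where "b = - ip n y e1"
  show ?thesis
  proof (cases "a = 0 \<and> b = 0")
    case True
    show ?thesis
    proof (intro exI conjI)
      show "0 < nrm2 n e1" by (rule eigvec_nrm2[OF e1])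
      show "ip n y e1 = 0" using True b_def by simp
      have "Rq n H e1 = lam1 n H * nrm2 n e1" by (rule eigvec_Rq[OF e1])
      also have "\<dots> \<le> lam2 n H * nrm2 n e1" using lt nrm2_nonneg by (intro mult_right_mono) auto
      finally show "Rq n H e1 \<le> lam2 n H * nrm2 n e1" .
    qed
  next
    case False
    define x where "x = (\<lambda>i. a * e1 i + b * e2 i)"
    have n1: "0 < nrm2 n e1" "0 < nrm2 n e2" using eigvec_nrm2 e1 e2 by auto
    have pair: "ip n x (\<lambda>i. c1 * e1 i + c2 * e2 i)
        = cnj a * c1 * of_real (nrm2 n e1) + cnj b * c2 * of_real (nrm2 n e2)" for c1 c2
    proof -
      have "ip n x (\<lambda>i. c1 * e1 i + c2 * e2 i) = cnj a * c1 * ip n e1 e1 + cnj a * c2 * ip n e1 e2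
          + cnj b * c1 * ip n e2 e1 + cnj b * c2 * ip n e2 e2"
        unfolding x_def ip_add_left ip_add_right ip_scale_left ip_scale_right
        by (simp add: algebra_simps)
      thus ?thesis unfolding o12 o21 ip_self by simp
    qed
    have ca: "cnj a * a = of_real ((cmod a)\<^sup>2)" "cnj b * b = of_real ((cmod b)\<^sup>2)"
      by (rule cnj_mult_self)+
    have nx: "ip n x x = of_real ((cmod a)\<^sup>2 * nrm2 n e1 + (cmod b)\<^sup>2 * nrm2 n e2)"
      using pair[of a b] unfolding x_def[symmetric] ca by simp
    hence nx': "nrm2 n x = (cmod a)\<^sup>2 * nrm2 n e1 + (cmod b)\<^sup>2 * nrm2 n e2"
      unfolding ip_self by (simp only: of_real_eq_iff)
    have "ip n x (matvec n H x) = ip n x (\<lambda>i. (a * of_real (lam1 n H)) * e1 i + (b * of_real (lam2 n H)) * e2 i)"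
      using e1 e2 unfolding eigvec_def x_def matvec_add matvec_scale by (intro ip_cong) (simp add: algebra_simps)
    also have "\<dots> = cnj a * a * of_real (lam1 n H) * of_real (nrm2 n e1) + cnj b * b * of_real (lam2 n H) * of_real (nrm2 n e2)"
      unfolding pair by (simp add: mult.assoc)
    also have "\<dots> = of_real ((cmod a)\<^sup>2 * lam1 n H * nrm2 n e1 + (cmod b)\<^sup>2 * lam2 n H * nrm2 n e2)"
      unfolding ca by simp
    finally have Rx: "Rq n H x = (cmod a)\<^sup>2 * lam1 n H * nrm2 n e1 + (cmod b)\<^sup>2 * lam2 n H * nrm2 n e2"
      unfolding Rq_def by simp
    show ?thesis
    proof (intro exI conjI)
      show "0 < nrm2 n x" unfolding nx' using False n1
        by (auto intro: add_pos_nonneg add_nonneg_pos)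
      show "ip n y x = 0" unfolding x_def ip_add_right ip_scale_right a_def b_def by simp
      have "(cmod a)\<^sup>2 * lam1 n H * nrm2 n e1 \<le> (cmod a)\<^sup>2 * lam2 n H * nrm2 n e1"
        using lt n1 by (intro mult_right_mono mult_left_mono) auto
      thus "Rq n H x \<le> lam2 n H * nrm2 n x" unfolding Rx nx' by (simp add: algebra_simps)
    qed
  qed
qed



lemma Rq_add:
  assumes "\<forall>i<n. \<forall>j<n. G i j = H i j + E i j"
  shows "Rq n G x = Rq n H x + Rq n E x"
proof -
  have "ip n x (matvec n G x) = ip n x (\<lambda>i. matvec n H x i + matvec n E x i)"
  proof (rule ip_cong)
    fix i assume i: "i < n"
    show "matvec n G x i = matvec n H x i + matvec n E x i"
      unfolding matvec_def sum.distrib[symmetric] distrib_right[symmetric]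
      by (rule sum.cong) (use assms i in auto)
  qed
  thus ?thesis unfolding Rq_def ip_add_right by simp
qed

lemma Rq_opnorm: "\<bar>Rq n E x\<bar> \<le> opnorm n E * nrm2 n x"
  unfolding Rq_def using abs_Re_le_cmod ip_opnorm order_trans by blast

lemma lam_lip:
  assumes hH: "hermitian n H" and hG: "hermitian n G" and n: "2 \<le> n"
    and sH: "lam1_simple n H" and sG: "lam1_simple n G"
    and GHE: "\<forall>i<n. \<forall>j<n. G i j = H i j + E i j"
  shows "lam1 n G \<le> lam1 n H + opnorm n E" and "lam2 n G \<le> lam2 n H + opnorm n E"
proof -
  have n0: "0 < n" using n by simp
  have RG: "Rq n G x \<le> Rq n H x + opnorm n E * nrm2 n x" for x
    using Rq_add[OF GHE, of x] Rq_opnorm[of n E x] by linarith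
  obtain x where x: "eigvec n H (lam1 n H) x" using lam1_props[OF hH n0] by blast
  have "lam1 n G * nrm2 n x \<le> Rq n G x" using lam1_props[OF hG n0] by blast
  also have "\<dots> \<le> (lam1 n H + opnorm n E) * nrm2 n x"
    using RG[of x] eigvec_Rq[OF x] by (simp add: algebra_simps)
  finally show "lam1 n G \<le> lam1 n H + opnorm n E"
    using eigvec_nrm2[OF x] by simp
  obtain e1 where e1: "\<forall>z. ip n e1 z = 0 \<longrightarrow> lam2 n G * nrm2 n z \<le> Rq n G z"
    using lam2_props(1)[OF hG n sG] by blast
  obtain y where y: "0 < nrm2 n y" "ip n e1 y = 0" "Rq n H y \<le> lam2 n H * nrm2 n y"
    using lam2_upper[OF hH n sH] by blast
  have "lam2 n G * nrm2 n y \<le> Rq n G y" using e1 y(2) by blast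
  also have "\<dots> \<le> (lam2 n H + opnorm n E) * nrm2 n y"
    using RG[of y] y(3) by (simp add: algebra_simps)
  finally show "lam2 n G \<le> lam2 n H + opnorm n E"
    using y(1) by simp
qed

lemma Hint_herm:
  assumes "hermitian n H0" "hermitian n H1"
  shows "hermitian n (Hint H0 H1 v)"
  unfolding hermitian_def
proof (intro allI impI)
  fix i j assume ij: "i < n" "j < n"
  have a: "H0 i j = cnj (H0 j i)" "H1 i j = cnj (H1 j i)"
    using assms ij unfolding hermitian_def by blast+
  show "Hint H0 H1 v i j = cnj (Hint H0 H1 v j i)"
    unfolding Hint_def by (simp add: a)
qed

lemma Hint_diff: "Hint H0 H1 w i j = Hint H0 H1 v i j + complex_of_real (w - v) * matdiff H1 H0 i j"
  unfolding Hint_def matdiff_def by (simp add: algebra_simps)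

lemma gap_lip:
  assumes hH0: "hermitian n H0" and hH1: "hermitian n H1" and n: "2 \<le> n"
    and sv: "lam1_simple n (Hint H0 H1 v)" and sw: "lam1_simple n (Hint H0 H1 w)"
  shows "\<bar>gap n H0 H1 w - gap n H0 H1 v\<bar> \<le> 2 * opnorm n (matdiff H1 H0) * \<bar>w - v\<bar>"
proof -
  let ?A = "opnorm n (matdiff H1 H0)"
  have hv: "hermitian n (Hint H0 H1 v)" and hw: "hermitian n (Hint H0 H1 w)"
    using Hint_herm[OF hH0 hH1] by auto
  have o1: "opnorm n (\<lambda>i j. complex_of_real (w - v) * matdiff H1 H0 i j) = \<bar>w - v\<bar> * ?A"
    by (simp only: opnorm_scale norm_of_real)
  have o2: "opnorm n (\<lambda>i j. complex_of_real (v - w) * matdiff H1 H0 i j) = \<bar>w - v\<bar> * ?A"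
    by (simp only: opnorm_scale norm_of_real abs_minus_commute)
  have e1: "\<forall>i<n. \<forall>j<n. Hint H0 H1 w i j = Hint H0 H1 v i j + complex_of_real (w - v) * matdiff H1 H0 i j"
    using Hint_diff by blast
  have e2: "\<forall>i<n. \<forall>j<n. Hint H0 H1 v i j = Hint H0 H1 w i j + complex_of_real (v - w) * matdiff H1 H0 i j"
    using Hint_diff by blast
  note a = lam_lip[OF hv hw n sv sw e1, unfolded o1] lam_lip[OF hw hv n sw sv e2, unfolded o2]
  have m: "2 * ?A * \<bar>w - v\<bar> = 2 * (\<bar>w - v\<bar> * ?A)" by simp
  show ?thesis unfolding gap_def m abs_le_iff using a by linarith
qed

lemma deriv_lip_bound:
  fixes f :: "real \<Rightarrow> real"
  assumes lip: "\<And>w. w \<in> {0..1} \<Longrightarrow> \<bar>f w - f v\<bar> \<le> L * \<bar>w - v\<bar>"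
    and d: "(f has_real_derivative D) (at v within {0..1})" and v: "v \<in> {0..1}"
  shows "\<bar>D\<bar> \<le> L"
proof -
  have nt: "at v within {0..1::real} \<noteq> bot"
    using v islimpt_Icc[of 0 1 v] trivial_limit_within[of v "{0..1}"] by auto
  have t: "((\<lambda>y. \<bar>(f y - f v) / (y - v)\<bar>) \<longlongrightarrow> \<bar>D\<bar>) (at v within {0..1})"
    using d unfolding has_field_derivative_iff by (rule tendsto_rabs)
  have ev: "eventually (\<lambda>y. \<bar>(f y - f v) / (y - v)\<bar> \<le> L) (at v within {0..1})"
    unfolding eventually_at_filter
  proof (rule always_eventually, intro allI impI)
    fix y assume "y \<noteq> v" "y \<in> {0..1::real}"
    thus "\<bar>(f y - f v) / (y - v)\<bar> \<le> L" using lip[of y] by (simp add: abs_divide divide_le_eq)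
  qed
  show ?thesis by (rule tendsto_upperbound[OF t ev nt])
qed

lemma deriv_unique_Icc:
  fixes f :: "real \<Rightarrow> real"
  assumes "(f has_real_derivative a) (at x within {0..1})" "(f has_real_derivative b) (at x within {0..1})"
    "x \<in> {0..1}"
  shows "a = b"
proof -
  have nt: "at x within {0..1::real} \<noteq> bot"
    using assms(3) islimpt_Icc[of 0 1 x] trivial_limit_within[of x "{0..1}"] by auto
  show ?thesis using assms(1,2) unfolding has_field_derivative_iff
    using tendsto_unique[OF nt] by blast
qed



lemma pow2_powr: "((2::real) ^ k) powr a = (2 powr a) ^ k"
  by (simp add: powr_realpow[symmetric] powr_powr powr_power mult.commute)

lemma ptwise:
  fixes q m y :: real
  assumes q: "0 < q" and m: "0 < m" and my: "m \<le> y"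
  shows "y \<le> 2 ^ N * m \<Longrightarrow>
    y powr (-q) \<le> (\<Sum>k\<le>N. 2 powr q * (2 ^ k * m) powr (-q) * (if y \<le> 2 ^ k * m then 1 else 0))"
proof (induction N)
  case 0
  hence "y = m" using my by simp
  moreover have "m powr (-q) \<le> 2 powr q * m powr (-q)"
  proof -
    have "1 \<le> (2::real) powr q" using q by (intro ge_one_powr_ge_zero) auto
    from mult_right_mono[OF this, of "m powr (-q)"] show ?thesis by simp
  qed
  ultimately show ?case by simp
next
  case (Suc N)
  have nn: "0 \<le> (\<Sum>k\<le>N. 2 powr q * (2 ^ k * m) powr (-q) * (if y \<le> 2 ^ k * m then 1 else 0))"
    by (intro sum_nonneg) auto
  show ?case
  proof (cases "y \<le> 2 ^ N * m")
    case True
    hence ih: "y powr (-q) \<le> (\<Sum>k\<le>N. 2 powr q * (2 ^ k * m) powr (-q) * (if y \<le> 2 ^ k * m then 1 else 0))"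
      by (rule Suc.IH)
    have t0: "0 \<le> 2 powr q * (2 ^ Suc N * m) powr (-q) * (if y \<le> 2 ^ Suc N * m then 1 else 0)" by simp
    show ?thesis using ih t0 by (simp only: sum.atMost_Suc)
  next
    case False
    have e: "2 powr q * (2 ^ Suc N * m) powr (-q) = (2 ^ N * m) powr (-q)"
    proof -
      have "(2 ^ Suc N * m) powr (-q) = 2 powr (-q) * (2 ^ N * m) powr (-q)"
        using m by (simp add: powr_mult[symmetric] mult.assoc)
      thus ?thesis by (simp add: powr_minus field_simps)
    qed
    have "y powr (-q) \<le> (2 ^ N * m) powr (-q)"
      using False m q by (intro powr_mono2') auto
    thus ?thesis using Suc.prems nn unfolding sum.atMost_Suc e by simp
  qed
qed

lemma int_bound:
  fixes D :: "real \<Rightarrow> real" and q C m :: real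
  assumes q: "1 < q" and C: "0 < C" and m: "0 < m"
    and cont: "continuous_on {0..1} D" and lb: "\<And>v. v \<in> {0..1} \<Longrightarrow> m \<le> D v"
    and mc: "measure_condition D C"
  shows "integral {0..1} (\<lambda>v. D v powr (-q)) \<le> 2 powr q * C / (1 - 2 powr (1 - q)) * m powr (1 - q)"
proof -
  obtain M where M: "\<And>v. v \<in> {0..1} \<Longrightarrow> D v \<le> M"
    using compact_attains_sup[of "D ` {0..1}"] compact_continuous_image[OF cont]
    by (metis atLeastAtMost_iff compact_Icc image_eqI image_is_empty order_refl zero_le_one ex_in_conv)
  obtain N where N: "M / m < 2 ^ N" using real_arch_pow[of 2 "M / m"] by auto
  have DN: "D v \<le> 2 ^ N * m" if "v \<in> {0..1}" for v
    using M[OF that] N m by (simp add: divide_less_eq mult.commute)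
  define T where "T = (\<lambda>k::nat. {v \<in> {0..1}. D v \<le> 2 ^ k * m})"
  define w where "w = (\<lambda>k::nat. 2 powr q * (2 ^ k * m) powr (-q))"
  have Tsub: "T k \<subseteq> {0..1}" for k unfolding T_def by auto
  have Tcl: "T k = {0..1} \<inter> D -` {..2 ^ k * m}" for k unfolding T_def by auto
  have Tl: "T k \<in> lmeasurable" for k
  proof -
    have "closed (T k)" unfolding Tcl by (rule continuous_closed_preimage[OF cont]) auto
    hence "compact ({0..1} \<inter> T k)" by (intro compact_Int_closed compact_Icc)
    moreover have "{0..1} \<inter> T k = T k" using Tsub by blast
    ultimately have "compact (T k)" by simp
    thus ?thesis by (rule lmeasurable_compact)
  qed
  have Tint: "indicat_real (T k) integrable_on {0..1}" for k
    unfolding integrable_on_indicator using Tl Tsub by (simp add: Int_absorb2)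
  have Tmeas: "integral {0..1} (indicat_real (T k)) = measure lebesgue (T k)" for k
  proof -
    have "integral {0..1} (indicat_real (T k)) = integral UNIV (\<lambda>x. if x \<in> {0..1} then indicat_real (T k) x else 0)"
      by (rule integral_restrict_UNIV[symmetric])
    also have "(\<lambda>x. if x \<in> {0..1} then indicat_real (T k) x else 0) = indicat_real (T k)"
    proof
      fix x show "(if x \<in> {0..1} then indicat_real (T k) x else 0) = indicat_real (T k) x"
        using Tsub[of k] by (auto simp: indicator_def)
    qed
    finally show ?thesis using lmeasure_integral_UNIV[OF Tl] by simp
  qed
  have pw: "D v powr (-q) \<le> (\<Sum>k\<le>N. w k * indicat_real (T k) v)" if v: "v \<in> {0..1}" for v
  proof -
    have "D v powr (-q) \<le> (\<Sum>k\<le>N. 2 powr q * (2 ^ k * m) powr (-q) * (if D v \<le> 2 ^ k * m then 1 else 0))"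
      using q m lb[OF v] DN[OF v] by (intro ptwise) auto
    also have "\<dots> = (\<Sum>k\<le>N. w k * indicat_real (T k) v)"
      unfolding w_def T_def using v by (intro sum.cong) (auto simp: indicator_def)
    finally show ?thesis .
  qed
  have cD: "continuous_on {0..1} (\<lambda>v. D v powr (-q))"
    using lb m by (intro continuous_intros cont) (auto dest: lb intro: order.strict_trans2)
  have "integral {0..1} (\<lambda>v. D v powr (-q)) \<le> integral {0..1} (\<lambda>v. \<Sum>k\<le>N. w k * indicat_real (T k) v)"
    by (rule integral_le[OF integrable_continuous_interval[OF cD] _ pw])
       (intro integrable_sum integrable_on_mult_right Tint, simp_all)
  also have "\<dots> = (\<Sum>k\<le>N. w k * measure lebesgue (T k))"
    by (subst integral_sum) (auto simp: Tint Tmeas integrable_on_mult_right)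
  also have "\<dots> \<le> (\<Sum>k\<le>N. 2 powr q * C * m powr (1 - q) * (2 powr (1 - q)) ^ k)"
  proof (rule sum_mono)
    fix k assume "k \<in> {..N}"
    have w0: "0 \<le> w k" unfolding w_def by simp
    have "measure lebesgue (T k) \<le> C * (2 ^ k * m)"
      using mc m unfolding measure_condition_def T_def by simp
    hence "w k * measure lebesgue (T k) \<le> w k * (C * (2 ^ k * m))" by (rule mult_left_mono[OF _ w0])
    also have "\<dots> = 2 powr q * C * ((2 ^ k * m) powr (-q) * (2 ^ k * m))" unfolding w_def by simp
    also have "(2 ^ k * m) powr (-q) * (2 ^ k * m) = (2 ^ k * m) powr (1 - q)"
    proof -
      have xp: "0 < (2::real) ^ k * m" using m by simp
      have "(2 ^ k * m) powr (-q) * (2 ^ k * m) = (2 ^ k * m) powr (-q) * (2 ^ k * m) powr 1"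
        using xp by simp
      also have "\<dots> = (2 ^ k * m) powr (-q + 1)" by (rule powr_add[symmetric])
      finally show ?thesis by simp
    qed
    also have "\<dots> = m powr (1 - q) * (2 powr (1 - q)) ^ k"
      using m by (simp add: powr_mult pow2_powr mult.commute)
    finally show "w k * measure lebesgue (T k) \<le> 2 powr q * C * m powr (1 - q) * (2 powr (1 - q)) ^ k"
      by (simp add: mult.assoc)
  qed
  also have "\<dots> = 2 powr q * C * m powr (1 - q) * (\<Sum>k\<le>N. (2 powr (1 - q)) ^ k)"
    by (simp add: sum_distrib_left)
  also have "\<dots> \<le> 2 powr q * C * m powr (1 - q) * (1 / (1 - 2 powr (1 - q)))"
  proof (rule mult_left_mono)
    let ?r = "2 powr (1 - q) :: real"
    have r1: "?r < 1" using q by (simp add: powr_less_one)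
    have r0: "0 < ?r" by simp
    have "(\<Sum>k\<le>N. ?r ^ k) = (\<Sum>k<Suc N. ?r ^ k)" by (simp add: lessThan_Suc_atMost)
    also have "\<dots> = (1 - ?r ^ Suc N) / (1 - ?r)" using r1 q by (simp only: sum_gp_strict) simp
    also have "\<dots> \<le> 1 / (1 - ?r)" using r1 r0 by (intro divide_right_mono) auto
    finally show "(\<Sum>k\<le>N. ?r ^ k) \<le> 1 / (1 - ?r)" .
    show "0 \<le> 2 powr q * C * m powr (1 - q)" using C by simp
  qed
  also have "\<dots> = 2 powr q * C / (1 - 2 powr (1 - q)) * m powr (1 - q)" by simp
  finally show ?thesis .
qed



lemma powr_p_minus:
  fixes d p :: real
  assumes "0 < d"
  shows "d powr (p - 1) = d powr p / d" and "d powr (-(3 - p)) = d powr p / d ^ 3"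
    and "d powr (p - 2) = d powr p / d\<^sup>2"
proof -
  show "d powr (p - 1) = d powr p / d" using assms by (simp add: powr_diff)
  have "d powr (-(3 - p)) = d powr (p - 3)" by simp
  also have "\<dots> = d powr p / d powr 3" using assms by (simp add: powr_diff)
  also have "d powr 3 = d ^ 3" using assms by (simp add: powr_numeral)
  finally show "d powr (-(3 - p)) = d powr p / d ^ 3" .
  have "d powr (p - 2) = d powr p / d powr 2" using assms by (simp add: powr_diff)
  also have "d powr 2 = d\<^sup>2" using assms by (simp add: powr_numeral)
  finally show "d powr (p - 2) = d powr p / d\<^sup>2" .
qed

lemma opnorm_Hderiv: "opnorm n (Hderiv H0 H1 uk s) = \<bar>uk s\<bar> * opnorm n (matdiff H1 H0)"
proof -
  have "Hderiv H0 H1 uk s = (\<lambda>i j. complex_of_real (uk s) * matdiff H1 H0 i j)"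
    unfolding Hderiv_def ..
  thus ?thesis by (simp only: opnorm_scale norm_of_real)
qed

lemma main_bound:
  fixes p C :: real and n :: nat and H0 H1 :: "nat \<Rightarrow> nat \<Rightarrow> complex" and u u1 u2 D' :: "real \<Rightarrow> real"
  assumes p1: "1 < p" and p2: "p < 2" and C: "0 < C"
    and n: "2 \<le> n" and hH0: "hermitian n H0" and hH1: "hermitian n H1"
    and simple: "\<forall>v\<in>{0..1}. lam1_simple n (Hint H0 H1 v)"
    and gpos: "\<forall>v\<in>{0..1}. gap n H0 H1 v > 0"
    and dD: "\<forall>v\<in>{0..1}. (gap n H0 H1 has_real_derivative D' v) (at v within {0..1})"
    and mc: "measure_condition (gap n H0 H1) C"
    and u0: "u 0 = 0" and u1': "u 1 = 1" and urange: "u ` {0..1} \<subseteq> {0..1}"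
    and du: "\<forall>s\<in>{0..1}. (u has_real_derivative u1 s) (at s within {0..1})
                   \<and> (u1 has_real_derivative u2 s) (at s within {0..1})"
    and u1eq: "\<forall>s\<in>{0..1}. u1 s = integral {0..1} (\<lambda>v. gap n H0 H1 v powr (-p))
                                * gap n H0 H1 (u s) powr p"
  defines "A \<equiv> opnorm n (matdiff H1 H0)"
  defines "Kp \<equiv> 2 powr p * C / (1 - 2 powr (1 - p))"
  defines "Kq \<equiv> 2 powr (3 - p) * C / (1 - 2 powr (1 - (3 - p)))"
  shows "sched_E n H0 H1 u u1 u2 \<le> (2 * A * Kp + (2 * p + 1) * A\<^sup>2 * Kp * Kq) / min_gap n H0 H1"
proof -
  define Dl where "Dl = gap n H0 H1"
  have A0: "0 \<le> A" unfolding A_def by (rule opnorm_nonneg)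
  have Kp0: "0 \<le> Kp" unfolding Kp_def using C p1 by (intro divide_nonneg_pos mult_nonneg_nonneg) (auto simp: powr_less_one)
  have Kq0: "0 \<le> Kq" unfolding Kq_def using C p2 by (intro divide_nonneg_pos mult_nonneg_nonneg) (auto simp: powr_less_one)
  have cont: "continuous_on {0..1} Dl"
    unfolding continuous_on_eq_continuous_within Dl_def using dD DERIV_continuous by blast
  obtain v0 where v0: "v0 \<in> {0..1}" and v0m: "\<And>v. v \<in> {0..1} \<Longrightarrow> Dl v0 \<le> Dl v"
    using continuous_attains_inf[OF compact_Icc _ cont] by force
  define m where "m = min_gap n H0 H1"
  have mdef: "m = Dl v0" unfolding m_def min_gap_def Dl_def[symmetric]
    by (rule cInf_eq_minimum) (use v0 v0m in auto)
  have m0: "0 < m" unfolding mdef Dl_def using gpos v0 by blast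
  have lb: "\<And>v. v \<in> {0..1} \<Longrightarrow> m \<le> Dl v" unfolding mdef by (rule v0m)
  have mc': "measure_condition Dl C" unfolding Dl_def by (rule mc)
  have Dbound: "\<bar>D' v\<bar> \<le> 2 * A" if v: "v \<in> {0..1}" for v
  proof -
    have lip: "\<bar>Dl w - Dl v\<bar> \<le> 2 * A * \<bar>w - v\<bar>" if w: "w \<in> {0..1}" for w
      unfolding Dl_def A_def using gap_lip[OF hH0 hH1 n] simple v w by blast
    have dv: "(Dl has_real_derivative D' v) (at v within {0..1})" using dD v unfolding Dl_def by blast
    show ?thesis by (rule deriv_lip_bound[OF lip dv v])
  qed
  define c where "c = integral {0..1} (\<lambda>v. Dl v powr (-p))"
  have cDp: "continuous_on {0..1} (\<lambda>v. Dl v powr (-p))"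
    using lb m0 by (intro continuous_intros cont) (auto dest: lb intro: order.strict_trans2)
  have c0: "0 \<le> c" unfolding c_def
    by (rule integral_nonneg[OF integrable_continuous_interval[OF cDp]]) simp
  have cK: "c \<le> Kp * m powr (1 - p)" unfolding c_def Kp_def
    by (rule int_bound[OF p1 C m0 cont lb mc'])
  define g where "g = (\<lambda>v. Dl v powr (-(3 - p)))"
  have cg: "continuous_on {0..1} g"
    unfolding g_def using lb m0 by (intro continuous_intros cont) (auto dest: lb intro: order.strict_trans2)
  have gK: "integral {0..1} g \<le> Kq * m powr (p - 2)"
  proof -
    have "integral {0..1} g \<le> Kq * m powr (1 - (3 - p))" unfolding g_def Kq_def
      by (rule int_bound) (use p2 C m0 cont lb mc' in auto)
    thus ?thesis by simp
  qed
  have g0: "0 \<le> integral {0..1} g"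
    by (rule integral_nonneg[OF integrable_continuous_interval[OF cg]]) (simp add: g_def)
  have us: "u s \<in> {0..1}" if "s \<in> {0..1}" for s using urange that by blast
  have dpos: "0 < Dl (u s)" if "s \<in> {0..1}" for s using lb[OF us[OF that]] m0 by linarith
  have u1s: "u1 s = c * Dl (u s) powr p" if "s \<in> {0..1}" for s
    using u1eq that unfolding c_def Dl_def by blast
  have u2s: "u2 s = c * (p * Dl (u s) powr (p - 1) * (D' (u s) * u1 s))" if s: "s \<in> {0..1}" for s
  proof -
    have d1: "(Dl has_real_derivative D' (u s)) (at (u s) within u ` {0..1})"
      using dD us[OF s] urange unfolding Dl_def by (blast intro: DERIV_subset)
    have d2': "(Dl \<circ> u has_real_derivative D' (u s) * u1 s) (at s within {0..1})"
      by (rule DERIV_image_chain[OF d1]) (use du s in blast)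
    have d2: "((\<lambda>s. Dl (u s)) has_real_derivative D' (u s) * u1 s) (at s within {0..1})"
      using d2' by (simp add: o_def)
    have d3: "((\<lambda>s. Dl (u s) powr p) has_real_derivative p * Dl (u s) powr (p - 1) * (D' (u s) * u1 s)) (at s within {0..1})"
      using DERIV_chain2[where f="\<lambda>z. z powr p" and g="\<lambda>s. Dl (u s)", OF has_real_derivative_powr[OF dpos[OF s]] d2] .
    have d4: "((\<lambda>s. c * Dl (u s) powr p) has_real_derivative c * (p * Dl (u s) powr (p - 1) * (D' (u s) * u1 s))) (at s within {0..1})"
      by (rule DERIV_cmult[OF d3])
    have d5: "(u1 has_real_derivative c * (p * Dl (u s) powr (p - 1) * (D' (u s) * u1 s))) (at s within {0..1})"
    proof (rule has_field_derivative_transform_within[OF d4, where d=1])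
      show "(0::real) < 1" by simp
      show "s \<in> {0..1}" by (rule s)
      fix x assume "x \<in> {0..1::real}"
      thus "c * Dl (u x) powr p = u1 x" using u1s by simp
    qed
    have "(u1 has_real_derivative u2 s) (at s within {0..1})" using du s by blast
    from deriv_unique_Icc[OF d5 this s] show ?thesis by simp
  qed
  define F where "F = (\<lambda>s. opnorm n (Hderiv H0 H1 u2 s) / (gap n H0 H1 (u s))\<^sup>2
                        + (opnorm n (Hderiv H0 H1 u1 s))\<^sup>2 / (gap n H0 H1 (u s)) ^ 3)"
  define K1 where "K1 = (2 * p + 1) * A\<^sup>2 * c"
  have K10: "0 \<le> K1" unfolding K1_def using p1 c0 by simp
  have Fb: "F s \<le> K1 * (u1 s * g (u s))" if s: "s \<in> {0..1}" for s
  proof -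
    define d where "d = Dl (u s)"
    define P where "P = d powr p"
    have d0: "0 < d" unfolding d_def by (rule dpos[OF s])
    have P0: "0 \<le> P" unfolding P_def by simp
    have gu: "g (u s) = P / d ^ 3" unfolding g_def P_def d_def[symmetric] using powr_p_minus(2)[OF d0] .
    have u1v: "u1 s = c * P" unfolding P_def d_def by (rule u1s[OF s])
    have u2v: "\<bar>u2 s\<bar> = c * c * p * P * P / d * \<bar>D' (u s)\<bar>"
      unfolding u2s[OF s] u1v powr_p_minus(1)[OF d0] d_def[symmetric] P_def[symmetric]
      using c0 P0 d0 p1 by (simp add: abs_mult)
    have "F s = \<bar>u2 s\<bar> * A / d\<^sup>2 + (c * P * A)\<^sup>2 / d ^ 3"
      unfolding F_def opnorm_Hderiv A_def[symmetric] Dl_def[symmetric] d_def[symmetric] u1v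
      using c0 P0 by (simp add: abs_mult)
    also have "\<bar>u2 s\<bar> * A / d\<^sup>2 = (c * c * p * P * P * A / d ^ 3) * \<bar>D' (u s)\<bar>"
      unfolding u2v using d0 by (simp add: field_simps power2_eq_square power3_eq_cube)
    also have "\<dots> \<le> (c * c * p * P * P * A / d ^ 3) * (2 * A)"
      using Dbound[OF us[OF s]] c0 P0 d0 p1 A0 by (intro mult_left_mono) auto
    also have "(c * c * p * P * P * A / d ^ 3) * (2 * A) + (c * P * A)\<^sup>2 / d ^ 3
        = K1 * (u1 s * g (u s))"
      unfolding K1_def u1v gu using d0 by (simp add: field_simps power2_eq_square power3_eq_cube)
    finally show ?thesis by simp
  qed
  have subst: "((\<lambda>s. u1 s *\<^sub>R g (u s)) has_integral integral {u 0..u 1} g) {0..1}"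
    by (rule has_integral_substitution[where c=0 and d=1]) (use u0 u1' urange cg du in auto)
  hence subst': "((\<lambda>s. u1 s * g (u s)) has_integral integral {0..1} g) {0..1}"
    unfolding u0 u1' by simp
  have intF: "integral {0..1} F \<le> K1 * integral {0..1} g"
  proof (cases "F integrable_on {0..1}")
    case True
    have "integral {0..1} F \<le> integral {0..1} (\<lambda>s. K1 * (u1 s * g (u s)))"
      by (rule integral_le[OF True _ Fb]) (use subst' in \<open>auto intro: integrable_on_mult_right\<close>)
    also have "\<dots> = K1 * integral {0..1} g"
      using integral_unique[OF subst'] by simp
    finally show ?thesis .
  next
    case False
    hence "integral {0..1} F = 0" by (rule not_integrable_integral)
    thus ?thesis using K10 g0 by simp
  qed
  have bd: "opnorm n (Hderiv H0 H1 u1 s) / (gap n H0 H1 (u s))\<^sup>2 \<le> A * Kp / m" if s: "s \<in> {0..1}" for s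
  proof -
    define d where "d = Dl (u s)"
    have d0: "0 < d" unfolding d_def by (rule dpos[OF s])
    have md: "m \<le> d" unfolding d_def by (rule lb[OF us[OF s]])
    have "opnorm n (Hderiv H0 H1 u1 s) / (gap n H0 H1 (u s))\<^sup>2 = A * c * (d powr p / d\<^sup>2)"
      unfolding opnorm_Hderiv A_def[symmetric] Dl_def[symmetric] d_def[symmetric] u1s[OF s]
      using c0 by (simp add: abs_mult d_def)
    also have "d powr p / d\<^sup>2 = d powr (p - 2)" using powr_p_minus(3)[OF d0] by simp
    also have "A * c * d powr (p - 2) \<le> A * (Kp * m powr (1 - p)) * m powr (p - 2)"
    proof (intro mult_mono mult_left_mono cK)
      show "d powr (p - 2) \<le> m powr (p - 2)" using p2 m0 md by (intro powr_mono2') auto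
    qed (use A0 c0 Kp0 m0 in auto)
    also have "\<dots> = A * Kp * (m powr (1 - p) * m powr (p - 2))" by simp
    also have "m powr (1 - p) * m powr (p - 2) = 1 / m"
      using m0 by (simp add: powr_add[symmetric] powr_minus_divide)
    finally show ?thesis by simp
  qed
  have "sched_E n H0 H1 u u1 u2 = opnorm n (Hderiv H0 H1 u1 0) / (gap n H0 H1 (u 0))\<^sup>2
     + opnorm n (Hderiv H0 H1 u1 1) / (gap n H0 H1 (u 1))\<^sup>2 + integral {0..1} F"
    unfolding sched_E_def F_def ..
  also have "\<dots> \<le> A * Kp / m + A * Kp / m + K1 * (Kq * m powr (p - 2))"
    using bd[of 0] bd[of 1] intF mult_left_mono[OF gK K10] by simp
  also have "K1 * (Kq * m powr (p - 2)) \<le> (2 * p + 1) * A\<^sup>2 * (Kp * m powr (1 - p)) * Kq * m powr (p - 2)"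
  proof -
    have X0: "0 \<le> Kq * m powr (p - 2)" using Kq0 by simp
    have "c * (Kq * m powr (p - 2)) \<le> (Kp * m powr (1 - p)) * (Kq * m powr (p - 2))"
      by (rule mult_right_mono[OF cK X0])
    hence "(2 * p + 1) * A\<^sup>2 * (c * (Kq * m powr (p - 2))) \<le> (2 * p + 1) * A\<^sup>2 * ((Kp * m powr (1 - p)) * (Kq * m powr (p - 2)))"
      by (rule mult_left_mono) (use p1 in simp)
    thus ?thesis unfolding K1_def by (simp only: mult.assoc)
  qed
  also have "(2 * p + 1) * A\<^sup>2 * (Kp * m powr (1 - p)) * Kq * m powr (p - 2)
      = (2 * p + 1) * A\<^sup>2 * Kp * Kq * (m powr (1 - p) * m powr (p - 2))" by simp
  also have "m powr (1 - p) * m powr (p - 2) = 1 / m"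
    using m0 by (simp add: powr_add[symmetric] powr_minus_divide)
  finally have E: "sched_E n H0 H1 u u1 u2 \<le> A * Kp / m + A * Kp / m + (2 * p + 1) * A\<^sup>2 * Kp * Kq * (1 / m)"
    by simp
  have eq: "A * Kp / m + A * Kp / m + (2 * p + 1) * A\<^sup>2 * Kp * Kq * (1 / m)
      = (2 * A * Kp + (2 * p + 1) * A\<^sup>2 * Kp * Kq) / m"
    by (simp add: add_divide_distrib)
  from E have "sched_E n H0 H1 u u1 u2 \<le> (2 * A * Kp + (2 * p + 1) * A\<^sup>2 * Kp * Kq) / m"
    by (simp only: eq)
  thus ?thesis unfolding m_def .
qed


theorem theorem2:
  fixes p C A :: real
  assumes "1 < p" and "p < 2" and "0 < C"
  shows "\<exists>B0::real. \<forall>(n::nat) H0 H1 (u::real \<Rightarrow> real) u1 u2.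
     2 \<le> n \<and> hermitian n H0 \<and> hermitian n H1 \<and> opnorm n (matdiff H1 H0) = A
     \<and> (\<forall>v\<in>{0..1}. lam1_simple n (Hint H0 H1 v))
     \<and> (\<forall>v\<in>{0..1}. gap n H0 H1 v > 0)
     \<and> (\<exists>D'. (\<forall>v\<in>{0..1}. (gap n H0 H1 has_real_derivative D' v) (at v within {0..1}))
             \<and> continuous_on {0..1} D')
     \<and> measure_condition (gap n H0 H1) C
     \<and> u 0 = 0 \<and> u 1 = 1 \<and> u ` {0..1} \<subseteq> {0..1} \<and> strict_mono_on {0..1} u
     \<and> (\<forall>s\<in>{0..1}. (u has_real_derivative u1 s) (at s within {0..1})
                   \<and> (u1 has_real_derivative u2 s) (at s within {0..1}))
     \<and> continuous_on {0..1} u2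
     \<and> (\<forall>s\<in>{0..1}. u1 s = integral {0..1} (\<lambda>v. gap n H0 H1 v powr (-p))
                                * gap n H0 H1 (u s) powr p)
     \<longrightarrow> sched_E n H0 H1 u u1 u2 \<le> B0 / min_gap n H0 H1"
proof -
  note p1 = assms(1) and p2 = assms(2) and C = assms(3)
  show ?thesis
  proof (rule exI[of _ "2 * A * (2 powr p * C / (1 - 2 powr (1 - p))) + (2 * p + 1) * A\<^sup>2 * (2 powr p * C / (1 - 2 powr (1 - p))) * (2 powr (3 - p) * C / (1 - 2 powr (1 - (3 - p))))"], intro allI impI)
    fix n :: nat and H0 H1 :: "nat \<Rightarrow> nat \<Rightarrow> complex" and u u1 u2 :: "real \<Rightarrow> real"
    assume H: "2 \<le> n \<and> hermitian n H0 \<and> hermitian n H1 \<and> opnorm n (matdiff H1 H0) = A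
     \<and> (\<forall>v\<in>{0..1}. lam1_simple n (Hint H0 H1 v))
     \<and> (\<forall>v\<in>{0..1}. gap n H0 H1 v > 0)
     \<and> (\<exists>D'. (\<forall>v\<in>{0..1}. (gap n H0 H1 has_real_derivative D' v) (at v within {0..1}))
             \<and> continuous_on {0..1} D')
     \<and> measure_condition (gap n H0 H1) C
     \<and> u 0 = 0 \<and> u 1 = 1 \<and> u ` {0..1} \<subseteq> {0..1} \<and> strict_mono_on {0..1} u
     \<and> (\<forall>s\<in>{0..1}. (u has_real_derivative u1 s) (at s within {0..1})
                   \<and> (u1 has_real_derivative u2 s) (at s within {0..1}))
     \<and> continuous_on {0..1} u2
     \<and> (\<forall>s\<in>{0..1}. u1 s = integral {0..1} (\<lambda>v. gap n H0 H1 v powr (-p))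
                                * gap n H0 H1 (u s) powr p)"
    from H obtain D' where dD: "\<forall>v\<in>{0..1}. (gap n H0 H1 has_real_derivative D' v) (at v within {0..1})"
      by blast
    have n: "2 \<le> n" using H by blast
    have hH0: "hermitian n H0" using H by blast
    have hH1: "hermitian n H1" using H by blast
    have hA: "opnorm n (matdiff H1 H0) = A" using H by blast
    have simple: "\<forall>v\<in>{0..1}. lam1_simple n (Hint H0 H1 v)" using H by blast
    have gpos: "\<forall>v\<in>{0..1}. gap n H0 H1 v > 0" using H by blast
    have mc: "measure_condition (gap n H0 H1) C" using H by blast
    have u0: "u 0 = 0" using H by blast
    have u1': "u 1 = 1" using H by blast
    have urange: "u ` {0..1} \<subseteq> {0..1}" using H by blast
    have du: "\<forall>s\<in>{0..1}. (u has_real_derivative u1 s) (at s within {0..1})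
                   \<and> (u1 has_real_derivative u2 s) (at s within {0..1})" using H by blast
    have u1eq: "\<forall>s\<in>{0..1}. u1 s = integral {0..1} (\<lambda>v. gap n H0 H1 v powr (-p))
                                * gap n H0 H1 (u s) powr p" using H by blast
    note mb = main_bound[OF p1 p2 C n hH0 hH1 simple gpos dD mc u0 u1' urange du u1eq]
    show "sched_E n H0 H1 u u1 u2 \<le> (2 * A * (2 powr p * C / (1 - 2 powr (1 - p))) + (2 * p + 1) * A\<^sup>2 * (2 powr p * C / (1 - 2 powr (1 - p))) * (2 powr (3 - p) * C / (1 - 2 powr (1 - (3 - p))))) / min_gap n H0 H1"
      using mb unfolding hA .
  qed
qed

end
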